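(* Suppose $(G_n\in\Delta^{n\times n})$ and $E\in\mathbb R_{\ge0}^{\mathbb N\times\mathbb N}$ satisfy $\lim_n\|\pi_nG_n-E\|_1=0$ for some permutations $\pi_n$ of $[n]$ (with $G_n$ zero-padded to an infinite array). Then $(G_n)$ quotient-converges to the grapheur $\mathsf M=\sum_{i,j}E_{i,j}\delta_{(T_i,T_j)}$, where $T_i$ are iid uniform on $[0,1]$.
   Context: $\Delta^{n\times n}$: $n\times n$ matrices with nonnegative entries summing to $1$. $(\pi G)_{i,j}=G_{\pi^{-1}(i),\pi^{-1}(j)}$; $\|\cdot\|_1$ is the entrywise $\ell_1$ norm. For $f:[n]\to[k]$, $(\rho(f)G)_{i,j}=\sum_{v\in f^{-1}(i),u\in f^{-1}(j)}G_{v,u}$; $F_{k,n}$ is a uniformly random map $[n]\to[k]$. For a random probability measure $\mathsf M$ on $[0,1]^2$, $\mathsf G_k[\mathsf M]$ is the random $k\times k$ matrix with entries $\mathsf M(I_i^{(k)}\times I_j^{(k)})$, $I_i^{(k)}=[(i-1)/k,i/k)$. $(G_n)$ quotient-converges to $\mathsf M$ if $\rho(F_{k,n})G_n\to\mathsf G_k[\mathsf M]$ in distribution for every $k$. *)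

theory Defs
  imports "HOL-Probability.Probability" "HOL-Combinatorics.Permutations"
begin

text \<open>Conventions: indices are 0-based, so [n] = {0..<n}. An n x n matrix is a
function nat => nat => real, of which only the entries with both indices < n are
read.\<close>

definition in_simplex :: "nat \<Rightarrow> (nat \<Rightarrow> nat \<Rightarrow> real) \<Rightarrow> bool" where
  "in_simplex n G \<longleftrightarrow>
     (\<forall>i<n. \<forall>j<n. 0 \<le> G i j) \<and> (\<Sum>i<n. \<Sum>j<n. G i j) = 1"

definition perm_pad :: "nat \<Rightarrow> (nat \<Rightarrow> nat) \<Rightarrow> (nat \<Rightarrow> nat \<Rightarrow> real) \<Rightarrow> nat \<Rightarrow> nat \<Rightarrow> real" where
  "perm_pad n \<pi> G i j = (if i < n \<and> j < n then G (inv \<pi> i) (inv \<pi> j) else 0)"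

definition l1_dist :: "(nat \<Rightarrow> nat \<Rightarrow> real) \<Rightarrow> (nat \<Rightarrow> nat \<Rightarrow> real) \<Rightarrow> ennreal" where
  "l1_dist A B = infsum (\<lambda>(i,j). ennreal \<bar>A i j - B i j\<bar>) UNIV"

definition quot :: "nat \<Rightarrow> (nat \<Rightarrow> nat) \<Rightarrow> (nat \<Rightarrow> nat \<Rightarrow> real) \<Rightarrow> nat \<Rightarrow> nat \<Rightarrow> real" where
  "quot n f G a b = (\<Sum>v<n. \<Sum>u<n. if f v = a \<and> f u = b then G v u else 0)"

definition rand_map :: "nat \<Rightarrow> nat \<Rightarrow> (nat \<Rightarrow> nat) pmf" where
  "rand_map k n = pmf_of_set (PiE {..<n} (\<lambda>_. {..<k}))"

definition bin :: "nat \<Rightarrow> nat \<Rightarrow> real set" where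
  "bin k a = {real a / real k ..< real (Suc a) / real k}"

definition Gk :: "nat \<Rightarrow> (real \<times> real) measure \<Rightarrow> nat \<Rightarrow> nat \<Rightarrow> real" where
  "Gk k M a b = (if a < k \<and> b < k then measure M (bin k a \<times> bin k b) else 0)"

definition grapheur :: "(nat \<Rightarrow> nat \<Rightarrow> real) \<Rightarrow> (nat \<Rightarrow> real) \<Rightarrow> (real \<times> real) measure" where
  "grapheur E T = measure_of UNIV (sets borel)
     (\<lambda>A. infsum (\<lambda>(i,j). ennreal (E i j) * indicator A (T i, T j)) UNIV)"

definition iid_unif :: "(nat \<Rightarrow> real) measure" where
  "iid_unif = PiM UNIV (\<lambda>_. uniform_measure lborel {0..1})"

definition conv_in_dist ::
  "(nat \<Rightarrow> 'a measure) \<Rightarrow> (nat \<Rightarrow> 'a \<Rightarrow> 'b::topological_space) \<Rightarrow> 'c measure \<Rightarrow> ('c \<Rightarrow> 'b) \<Rightarrow> bool" where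
  "conv_in_dist Ms Xs M X \<longleftrightarrow>
     (\<forall>h::'b \<Rightarrow> real. continuous_on UNIV h \<longrightarrow> bounded (range h) \<longrightarrow>
        ((\<lambda>n. \<integral>x. h (Xs n x) \<partial>Ms n) \<longlongrightarrow> (\<integral>x. h (X x) \<partial>M)) sequentially)"

definition quot_conv :: "(nat \<Rightarrow> nat \<Rightarrow> nat \<Rightarrow> real) \<Rightarrow> 'c measure \<Rightarrow> ('c \<Rightarrow> (real \<times> real) measure) \<Rightarrow> bool" where
  "quot_conv G P Mr \<longleftrightarrow>
     (\<forall>k\<ge>1. conv_in_dist (\<lambda>n. measure_pmf (rand_map k n)) (\<lambda>n f. quot n f (G n))
                          P (\<lambda>T. Gk k (Mr T)))"

end

theory Submission
  imports Defs
begin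

lemma dist_fun_le:
  fixes x y :: "'a::countable \<Rightarrow> 'b::metric_space"
  assumes "\<And>i. dist (x i) (y i) \<le> d" "0 \<le> d"
  shows "dist x y \<le> 2 * d"
proof -
  have s: "summable (\<lambda>n. (1/2::real)^n * d)"
    by (intro summable_mult2 summable_geometric) simp
  have le: "(1/2::real)^n * min (dist (x (from_nat n)) (y (from_nat n))) 1 \<le> (1/2)^n * d" for n
    using assms(1)[of "from_nat n"] by (intro mult_left_mono) auto
  have s2: "summable (\<lambda>n. (1/2::real)^n * min (dist (x (from_nat n)) (y (from_nat n))) 1)"
    by (rule summable_comparison_test'[OF s, of 0]) (use le in auto)
  have "dist x y = (\<Sum>n. (1/2::real)^n * min (dist (x (from_nat n)) (y (from_nat n))) 1)"
    by (simp add: dist_fun_def)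
  also have "\<dots> \<le> (\<Sum>n. (1/2::real)^n * d)"
    by (rule suminf_le[OF le s2 s])
  also have "\<dots> = (\<Sum>n. (1/2::real)^n) * d"
    by (rule suminf_mult2[symmetric]) (simp add: summable_geometric)
  also have "(\<Sum>n. (1/2::real)^n) = 2"
    using suminf_geometric[of "1/2::real"] by simp
  finally show ?thesis by simp
qed

lemma bin_iff:
  assumes "k \<ge> 1" "0 \<le> t" "t < 1"
  shows "t \<in> bin k a \<longleftrightarrow> a = nat \<lfloor>t * real k\<rfloor>"
proof -
  have kp: "real k > 0" using assms by simp
  have "t \<in> bin k a \<longleftrightarrow> real a \<le> t * real k \<and> t * real k < real a + 1"
    using kp by (simp add: bin_def divide_le_eq less_divide_eq algebra_simps)
  also have "\<dots> \<longleftrightarrow> \<lfloor>t * real k\<rfloor> = int a"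
    by (simp add: floor_eq_iff)
  also have "\<dots> \<longleftrightarrow> a = nat \<lfloor>t * real k\<rfloor>"
    using assms by auto
  finally show ?thesis .
qed

lemma beta_lt:
  assumes "k \<ge> 1" "0 \<le> t" "t < 1"
  shows "nat \<lfloor>t * real k\<rfloor> < k"
proof -
  have "t * real k < real k" using assms by simp
  then have "\<lfloor>t * real k\<rfloor> < int k"
    by (simp add: floor_less_iff)
  moreover have "0 \<le> \<lfloor>t * real k\<rfloor>" using assms by simp
  ultimately show ?thesis by (simp add: nat_less_iff)
qed

lemma bin_sub: assumes "a < k" shows "bin k a \<subseteq> {0..1}"
proof
  fix x assume x: "x \<in> bin k a"
  have kp: "real k > 0" using assms by simp
  have 0: "real a / real k \<ge> 0" by simp
  have 1: "real (Suc a) / real k \<le> 1" using assms kp by (simp add: divide_le_eq)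
  have 2: "real a / real k \<le> x" "x < real (Suc a) / real k" using x by (auto simp: bin_def)
  have "0 \<le> x" "x \<le> 1" using 0 1 2 by linarith+
  then show "x \<in> {0..1}" by simp
qed

lemma bin_sets[measurable]: "bin k a \<in> sets borel"
  by (simp add: bin_def)

lemma prob_U: "prob_space (uniform_measure lborel {0..1::real})"
  by (rule prob_space_uniform_measure) auto

lemma pps_U: "product_prob_space (\<lambda>_::nat. uniform_measure lborel {0..1::real})"
  by (rule product_prob_spaceI) (rule prob_U)

lemma emeasure_U_bin:
  assumes "a < k"
  shows "emeasure (uniform_measure lborel {0..1::real}) (bin k a) = ennreal (1 / real k)"
proof -
  have "emeasure (uniform_measure lborel {0..1::real}) (bin k a)
      = emeasure lborel ({0..1} \<inter> bin k a) / emeasure lborel {0..1::real}"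
    by (rule emeasure_uniform_measure) auto
  also have "{0..1} \<inter> bin k a = bin k a" using bin_sub[OF assms] by auto
  also have "emeasure lborel (bin k a) = ennreal (real (Suc a) / real k - real a / real k)"
    unfolding bin_def using assms by (intro emeasure_lborel_Ico) (simp add: divide_right_mono)
  finally show ?thesis using assms by (simp add: diff_divide_distrib[symmetric] divide_ennreal_def)
qed

lemma AE_U: "AE t in uniform_measure lborel {0..1::real}. t \<in> {0..<1}"
  by (rule AE_uniform_measureI) (auto intro: eventually_mono[OF AE_lborel_singleton[of 1]])

lemma AE_iid: "AE T in iid_unif. \<forall>i. T i \<in> {0..<1}"
  unfolding AE_all_countable iid_unif_def
  using product_prob_space.AE_component[OF pps_U, of _ UNIV "\<lambda>t. t \<in> {0..<1}"] AE_U by auto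

lemma infsum_ennreal_of_summable:
  fixes f :: "'a \<Rightarrow> real"
  assumes "f summable_on A" "\<And>x. x\<in>A \<Longrightarrow> 0 \<le> f x"
  shows "infsum (\<lambda>x. ennreal (f x)) A = ennreal (infsum f A)"
proof -
  have "infsum (\<lambda>x. ennreal (f x)) A = (SUP F\<in>{F. finite F \<and> F \<subseteq> A}. sum (\<lambda>x. ennreal (f x)) F)"
    by (rule nonneg_infsum_complete) simp
  also have "\<dots> = (SUP F\<in>{F. finite F \<and> F \<subseteq> A}. ennreal (sum f F))"
    using assms(2) by (intro SUP_cong refl sum_ennreal) auto
  also have "\<dots> = ennreal (infsum f A)"
    by (rule infsum_nonneg_is_SUPREMUM_ennreal[symmetric]) (use assms in auto)
  finally show ?thesis .
qed

lemma summable_of_ennreal_finite: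
  fixes f :: "'a \<Rightarrow> real"
  assumes "infsum (\<lambda>x. ennreal (f x)) A \<noteq> \<infinity>" "\<And>x. x\<in>A \<Longrightarrow> 0 \<le> f x"
  shows "f summable_on A"
proof (rule nonneg_bdd_above_summable_on)
  show "bdd_above (sum f ` {F. F\<subseteq>A \<and> finite F})"
  proof (rule bdd_aboveI2[where M="enn2real (infsum (\<lambda>x. ennreal (f x)) A)"])
    fix F assume "F \<in> {F. F\<subseteq>A \<and> finite F}"
    then have F: "F \<subseteq> A" "finite F" by auto
    have nn: "0 \<le> sum f F" using F assms(2) by (intro sum_nonneg) auto
    have "ennreal (sum f F) = sum (\<lambda>x. ennreal (f x)) F"
      using F assms(2) by (intro sum_ennreal[symmetric]) auto
    also have "\<dots> \<le> (SUP F\<in>{F. finite F \<and> F \<subseteq> A}. sum (\<lambda>x. ennreal (f x)) F)"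
      by (rule SUP_upper[where f="sum (\<lambda>x. ennreal (f x))"]) (use F in auto)
    also have "\<dots> = infsum (\<lambda>x. ennreal (f x)) A"
      by (rule nonneg_infsum_complete[symmetric]) simp
    finally have "enn2real (ennreal (sum f F)) \<le> enn2real (infsum (\<lambda>x. ennreal (f x)) A)"
      using assms(1) by (intro enn2real_mono) (auto simp: top.not_eq_extremum)
    then show "sum f F \<le> enn2real (infsum (\<lambda>x. ennreal (f x)) A)" using nn by simp
  qed
qed (use assms in auto)

lemma infsum_nat_ennreal: "infsum (f::nat \<Rightarrow> ennreal) UNIV = suminf f"
proof -
  have "infsum f UNIV = (SUP F\<in>{F. finite F \<and> F \<subseteq> UNIV}. sum f F)"
    by (rule nonneg_infsum_complete) simp
  also have "\<dots> = (SUP n. sum f {..<n})"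
  proof (rule antisym)
    show "(SUP F\<in>{F. finite F \<and> F \<subseteq> UNIV}. sum f F) \<le> (SUP n. sum f {..<n})"
    proof (rule SUP_least)
      fix F assume "F \<in> {F. finite F \<and> F \<subseteq> (UNIV::nat set)}"
      then have fin: "finite F" by simp
      then have "F \<subseteq> {..<Suc (Max F)}" using Max_ge[OF fin] by (auto simp: less_Suc_eq_le)
      then have "sum f F \<le> sum f {..<Suc (Max F)}" by (intro sum_mono2) auto
      also have "\<dots> \<le> (SUP n. sum f {..<n})" by (rule SUP_upper) simp
      finally show "sum f F \<le> (SUP n. sum f {..<n})" .
    qed
    show "(SUP n. sum f {..<n}) \<le> (SUP F\<in>{F. finite F \<and> F \<subseteq> UNIV}. sum f F)"
    proof (rule SUP_least)
      fix n :: nat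
      show "sum f {..<n} \<le> (SUP F\<in>{F. finite F \<and> F \<subseteq> UNIV}. sum f F)"
        by (rule SUP_upper[where f="sum f"]) auto
    qed
  qed
  also have "\<dots> = suminf f" by (rule suminf_eq_SUP[symmetric])
  finally show ?thesis .
qed

lemma infsum_nn_integral_pair:
  "infsum (g::nat\<times>nat \<Rightarrow> ennreal) UNIV = (\<integral>\<^sup>+ x. g x \<partial>count_space UNIV)"
proof -
  have b: "bij_betw prod_decode UNIV UNIV" using bij_prod_decode by (simp add: bij_def)
  have "infsum g UNIV = infsum (\<lambda>n. g (prod_decode n)) UNIV"
    by (rule infsum_reindex_bij_betw[OF b, symmetric])
  also have "\<dots> = (\<Sum>n. g (prod_decode n))" by (rule infsum_nat_ennreal)
  also have "\<dots> = (\<integral>\<^sup>+ n. g (prod_decode n) \<partial>count_space UNIV)"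
    by (rule nn_integral_count_space_nat[symmetric])
  also have "\<dots> = (\<integral>\<^sup>+ x. g x \<partial>count_space UNIV)"
    by (rule nn_integral_bij_count_space[OF b])
  finally show ?thesis .
qed

definition nu :: "(nat \<Rightarrow> nat \<Rightarrow> real) \<Rightarrow> (nat \<Rightarrow> real) \<Rightarrow> (real \<times> real) measure" where
  "nu E T = distr (density (count_space UNIV) (\<lambda>(i,j). ennreal (E i j))) borel (\<lambda>(i,j). (T i, T j))"

lemma emeasure_nu:
  assumes A: "A \<in> sets borel"
  shows "emeasure (nu E T) A = infsum (\<lambda>(i,j). ennreal (E i j) * indicator A (T i, T j)) UNIV"
proof -
  have m: "(\<lambda>(i,j). (T i, T j)) \<in> measurable (density (count_space UNIV) (\<lambda>(i,j). ennreal (E i j))) borel"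
    by simp
  have "emeasure (nu E T) A = emeasure (density (count_space UNIV) (\<lambda>(i,j). ennreal (E i j)))
      ((\<lambda>(i,j). (T i, T j)) -` A)"
    unfolding nu_def by (subst emeasure_distr[OF m A]) simp
  also have "\<dots> = (\<integral>\<^sup>+ x. (\<lambda>(i,j). ennreal (E i j)) x * indicator ((\<lambda>(i,j). (T i, T j)) -` A) x \<partial>count_space UNIV)"
    by (subst emeasure_density) auto
  also have "\<dots> = (\<integral>\<^sup>+ x. (\<lambda>(i,j). ennreal (E i j) * indicator A (T i, T j)) x \<partial>count_space UNIV)"
    by (intro nn_integral_cong) (auto simp: indicator_def)
  also have "\<dots> = infsum (\<lambda>(i,j). ennreal (E i j) * indicator A (T i, T j)) UNIV"
    by (rule infsum_nn_integral_pair[symmetric])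
  finally show ?thesis .
qed

lemma grapheur_nu: "grapheur E T = nu E T"
proof -
  have sp: "space (nu E T) = UNIV" "sets (nu E T) = sets borel" by (simp_all add: nu_def)
  have "nu E T = measure_of (space (nu E T)) (sets (nu E T)) (emeasure (nu E T))"
    by (rule measure_of_of_measure[symmetric])
  also have "\<dots> = measure_of UNIV (sets borel) (emeasure (nu E T))" using sp by simp
  also have "\<dots> = grapheur E T" unfolding grapheur_def
  proof (rule measure_of_eq)
    show "sets borel \<subseteq> Pow UNIV" by simp
    fix A :: "(real \<times> real) set" assume "A \<in> sigma_sets UNIV (sets borel)"
    then have A: "A \<in> sets borel" by (metis sets.sigma_sets_eq space_borel)
    show "emeasure (nu E T) A = infsum (\<lambda>(i,j). ennreal (E i j) * indicator A (T i, T j)) UNIV"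
      by (rule emeasure_nu[OF A])
  qed
  finally show ?thesis by simp
qed

lemma measure_grapheur_bin:
  assumes S: "(\<lambda>(i,j). E i j) summable_on UNIV" and E: "\<forall>i j. 0 \<le> E i j"
  shows "measure (grapheur E T) (bin k a \<times> bin k b) =
     infsum (\<lambda>(i,j). E i j * indicator (bin k a) (T i) * indicator (bin k b) (T j)) UNIV"
proof -
  let ?f = "\<lambda>(i,j). E i j * indicator (bin k a) (T i) * indicator (bin k b) (T j) :: real"
  have S2: "?f summable_on UNIV"
    by (rule summable_on_comparison_test[OF S]) (use E in \<open>auto simp: indicator_def\<close>)
  have nn: "\<And>x. 0 \<le> ?f x" using E by (auto simp: indicator_def)
  have "emeasure (grapheur E T) (bin k a \<times> bin k b)
     = infsum (\<lambda>(i,j). ennreal (E i j) * indicator (bin k a \<times> bin k b) (T i, T j)) UNIV"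
  proof -
    have "bin k a \<times> bin k b \<in> sets (borel \<Otimes>\<^sub>M borel)" by (intro pair_measureI) (simp_all add: bin_def)
    then have "bin k a \<times> bin k b \<in> sets borel" by (metis borel_prod)
    then show ?thesis unfolding grapheur_nu by (rule emeasure_nu)
  qed
  also have "\<dots> = infsum (\<lambda>x. ennreal (?f x)) UNIV"
    by (intro infsum_cong) (auto simp: indicator_def)
  also have "\<dots> = ennreal (infsum ?f UNIV)"
    by (rule infsum_ennreal_of_summable[OF S2]) (use nn in auto)
  finally have "emeasure (grapheur E T) (bin k a \<times> bin k b) = ennreal (infsum ?f UNIV)" .
  moreover have "0 \<le> infsum ?f UNIV" by (rule infsum_nonneg) (use nn in auto)
  ultimately show ?thesis by (simp add: measure_def)
qed

definition Xp :: "nat \<Rightarrow> nat \<Rightarrow> (nat \<Rightarrow> nat \<Rightarrow> real) \<Rightarrow> (nat \<Rightarrow> real) \<Rightarrow> nat \<Rightarrow> nat \<Rightarrow> real" where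
  "Xp k n P T a b = (if a < k \<and> b < k then
     (\<Sum>i<n. \<Sum>j<n. P i j * indicator (bin k a) (T i) * indicator (bin k b) (T j)) else 0)"

lemma space_iid: "space iid_unif = UNIV"
  by (simp add: iid_unif_def space_PiM)

lemma prob_iid: "prob_space iid_unif"
  unfolding iid_unif_def by (rule prob_space_PiM) (rule prob_U)

lemma Xp_measurable: "Xp k n P \<in> borel_measurable iid_unif"
proof (rule measurable_coordinatewise_then_product)
  fix a
  show "(\<lambda>T. Xp k n P T a) \<in> borel_measurable iid_unif"
  proof (rule measurable_coordinatewise_then_product)
    fix b
    show "(\<lambda>T. Xp k n P T a b) \<in> borel_measurable iid_unif"
      unfolding Xp_def iid_unif_def by measurable
  qed
qed

lemma coupling:
  fixes H :: "(nat \<Rightarrow> nat \<Rightarrow> real) \<Rightarrow> real" and G :: "nat \<Rightarrow> nat \<Rightarrow> real"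
  assumes k: "k \<ge> 1" and \<sigma>: "\<sigma> permutes {..<n}" and hm: "H \<in> borel_measurable borel"
  shows "(\<integral>f. H (quot n f G) \<partial>measure_pmf (rand_map k n))
       = (\<integral>T. H (Xp k n (perm_pad n \<sigma> G) T) \<partial>iid_unif)"
proof -
  define PS where "PS = PiE {..<n} (\<lambda>_. {..<k})"
  have fin: "finite PS" unfolding PS_def by (simp add: finite_PiE)
  have ne: "PS \<noteq> {}" unfolding PS_def using k by (auto simp: PiE_eq_empty_iff lessThan_empty_iff)
  have card: "card PS = k ^ n" unfolding PS_def by (simp add: card_PiE)
  interpret P: prob_space iid_unif by (rule prob_iid)
  have inv\<sigma>: "inv \<sigma> permutes {..<n}" by (rule permutes_inv[OF \<sigma>])
  have inv_lt: "inv \<sigma> i < n" if "i < n" for i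
    using permutes_in_image[OF inv\<sigma>] that by simp
  have \<sigma>_lt: "\<sigma> i < n" if "i < n" for i
    using permutes_in_image[OF \<sigma>] that by simp
  define C where "C f = {T \<in> space iid_unif. \<forall>i\<in>{..<n}. T i \<in> bin k (f (inv \<sigma> i))}" for f :: "nat \<Rightarrow> nat"
  have Cm: "C f \<in> sets iid_unif" for f
    unfolding C_def iid_unif_def by measurable
  have PS_lt: "f v < k" if "f \<in> PS" "v < n" for f v
    using that unfolding PS_def by auto
  have measC: "measure iid_unif (C f) = (1 / real k) ^ n" if f: "f \<in> PS" for f
  proof -
    have "emeasure iid_unif (C f) = (\<Prod>i\<in>{..<n}. emeasure (uniform_measure lborel {0..1::real}) (bin k (f (inv \<sigma> i))))"
      unfolding C_def iid_unif_def
      by (rule product_prob_space.emeasure_PiM_Collect[OF pps_U]) auto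
    also have "\<dots> = (\<Prod>i\<in>{..<n}. ennreal (1 / real k))"
      by (intro prod.cong refl emeasure_U_bin PS_lt[OF f] inv_lt) simp
    also have "\<dots> = ennreal ((1 / real k) ^ n)"
      by (simp add: prod_ennreal[symmetric] ennreal_power)
    finally show ?thesis by (simp add: measure_def)
  qed
  define F where "F T = (\<Sum>f\<in>PS. H (quot n f G) * indicator (C f) T)" for T
  have AE: "AE T in iid_unif. H (Xp k n (perm_pad n \<sigma> G) T) = F T"
    using AE_iid
  proof (rule eventually_mono)
    fix T :: "nat \<Rightarrow> real" assume T: "\<forall>i. T i \<in> {0..<1}"
    define f0 where "f0 = restrict (\<lambda>v. nat \<lfloor>T (\<sigma> v) * real k\<rfloor>) {..<n}"
    have f0PS: "f0 \<in> PS" unfolding PS_def f0_def using beta_lt[OF k] T by auto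
    have binT: "T i \<in> bin k a \<longleftrightarrow> a = nat \<lfloor>T i * real k\<rfloor>" for i a
      using bin_iff[OF k] T by auto
    have f0inv: "f0 (inv \<sigma> i) = nat \<lfloor>T i * real k\<rfloor>" if "i < n" for i
      using that inv_lt[OF that] by (simp add: f0_def permutes_inverses(1)[OF \<sigma>])
    have Ciff: "T \<in> C f \<longleftrightarrow> f = f0" if f: "f \<in> PS" for f
    proof
      assume "T \<in> C f"
      then have h: "\<And>i. i < n \<Longrightarrow> f (inv \<sigma> i) = nat \<lfloor>T i * real k\<rfloor>"
        unfolding C_def using binT by auto
      show "f = f0"
      proof (rule PiE_ext[OF f[unfolded PS_def] f0PS[unfolded PS_def]])
        fix v assume v: "v \<in> {..<n}"
        have "f v = f (inv \<sigma> (\<sigma> v))" by (simp add: permutes_inverses(2)[OF \<sigma>])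
        also have "\<dots> = nat \<lfloor>T (\<sigma> v) * real k\<rfloor>" using h \<sigma>_lt v by simp
        also have "\<dots> = f0 v" using v by (simp add: f0_def)
        finally show "f v = f0 v" .
      qed
    next
      assume "f = f0"
      then show "T \<in> C f" unfolding C_def using binT f0inv by (auto simp: space_iid)
    qed
    have "F T = (\<Sum>f\<in>PS. if f = f0 then H (quot n f G) else 0)"
      unfolding F_def by (intro sum.cong refl) (auto simp: Ciff indicator_def)
    also have "\<dots> = H (quot n f0 G)" using fin f0PS by simp
    finally have FT: "F T = H (quot n f0 G)" .
    have "Xp k n (perm_pad n \<sigma> G) T = quot n f0 G"
    proof (intro ext)
      fix a b
      show "Xp k n (perm_pad n \<sigma> G) T a b = quot n f0 G a b"
      proof (cases "a < k \<and> b < k")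
        case True
        have "Xp k n (perm_pad n \<sigma> G) T a b =
          (\<Sum>i<n. \<Sum>j<n. perm_pad n \<sigma> G i j * indicator (bin k a) (T i) * indicator (bin k b) (T j))"
          using True by (simp add: Xp_def)
        also have "\<dots> =
          (\<Sum>i<n. \<Sum>j<n. if f0 (inv \<sigma> i) = a \<and> f0 (inv \<sigma> j) = b then G (inv \<sigma> i) (inv \<sigma> j) else 0)"
          by (intro sum.cong refl) (auto simp: perm_pad_def indicator_def binT f0inv)
        also have "\<dots> = (\<Sum>v<n. \<Sum>u<n. if f0 v = a \<and> f0 u = b then G v u else 0)"
        proof -
          have bij: "bij_betw (inv \<sigma>) {..<n} {..<n}" by (rule permutes_imp_bij[OF inv\<sigma>])
          have "(\<Sum>i<n. \<Sum>j<n. if f0 (inv \<sigma> i) = a \<and> f0 (inv \<sigma> j) = b then G (inv \<sigma> i) (inv \<sigma> j) else 0)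
              = (\<Sum>i<n. \<Sum>u<n. if f0 (inv \<sigma> i) = a \<and> f0 u = b then G (inv \<sigma> i) u else 0)"
            by (intro sum.cong refl sum.reindex_bij_betw[OF bij])
          also have "\<dots> = (\<Sum>v<n. \<Sum>u<n. if f0 v = a \<and> f0 u = b then G v u else 0)"
            by (rule sum.reindex_bij_betw[OF bij])
          finally show ?thesis .
        qed
        also have "\<dots> = quot n f0 G a b" by (simp add: quot_def)
        finally show ?thesis .
      next
        case False
        have "f0 v < k" if "v < n" for v using PS_lt[OF f0PS that] .
        then have "quot n f0 G a b = 0" using False unfolding quot_def
          by (intro sum.neutral ballI) auto
        moreover have "Xp k n (perm_pad n \<sigma> G) T a b = 0"
          unfolding Xp_def using False by (rule if_not_P)
        ultimately show ?thesis by simp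
      qed
    qed
    then show "H (Xp k n (perm_pad n \<sigma> G) T) = F T" using FT by simp
  qed
  have "(\<integral>T. H (Xp k n (perm_pad n \<sigma> G) T) \<partial>iid_unif) = integral\<^sup>L iid_unif F"
  proof (rule integral_cong_AE)
    show "(\<lambda>T. H (Xp k n (perm_pad n \<sigma> G) T)) \<in> borel_measurable iid_unif"
      using measurable_compose[OF Xp_measurable hm] by (simp add: o_def)
    show "F \<in> borel_measurable iid_unif" unfolding F_def using Cm by measurable
  qed (rule AE)
  also have "\<dots> = (\<Sum>f\<in>PS. H (quot n f G) * measure iid_unif (C f))"
  proof -
    have int: "integrable iid_unif (\<lambda>T. H (quot n f G) * indicator (C f) T)" for f
      using Cm[of f] P.emeasure_finite[of "C f"] by (simp add: less_top[symmetric])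
    have "integral\<^sup>L iid_unif F = (\<Sum>f\<in>PS. \<integral>T. H (quot n f G) * indicator (C f) T \<partial>iid_unif)"
      unfolding F_def
      using Bochner_Integration.integral_sum[where I=PS and M=iid_unif and f="\<lambda>f T. H (quot n f G) * indicator (C f) T"] int
      by simp
    also have "\<dots> = (\<Sum>f\<in>PS. H (quot n f G) * measure iid_unif (C f))"
      by (intro sum.cong refl) (simp add: space_iid)
    finally show ?thesis .
  qed
  also have "\<dots> = (\<Sum>f\<in>PS. H (quot n f G) * (1 / real k) ^ n)"
    by (intro sum.cong refl) (simp add: measC)
  also have "\<dots> = (\<Sum>f\<in>PS. H (quot n f G)) / card PS"
    by (simp add: sum_distrib_right[symmetric] card power_one_over divide_inverse power_inverse)
  also have "\<dots> = (\<integral>f. H (quot n f G) \<partial>measure_pmf (rand_map k n))"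
    unfolding rand_map_def PS_def[symmetric] by (rule integral_pmf_of_set[OF ne fin, symmetric])
  finally show ?thesis ..
qed

definition Yl :: "(nat \<Rightarrow> nat \<Rightarrow> real) \<Rightarrow> nat \<Rightarrow> (nat \<Rightarrow> real) \<Rightarrow> nat \<Rightarrow> nat \<Rightarrow> real" where
  "Yl E k T a b = (if a < k \<and> b < k then
     infsum (\<lambda>(i,j). E i j * indicator (bin k a) (T i) * indicator (bin k b) (T j)) UNIV else 0)"

lemma l1_summable:
  assumes fin: "l1_dist P E \<noteq> \<infinity>"
  shows "(\<lambda>(i,j). \<bar>P i j - E i j\<bar>) summable_on UNIV"
    and "enn2real (l1_dist P E) = infsum (\<lambda>(i,j). \<bar>P i j - E i j\<bar>) UNIV"
proof -
  define f where "f = (\<lambda>(i,j). \<bar>P i j - E i j\<bar>)"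
  have eq: "infsum (\<lambda>x. ennreal (f x)) UNIV = l1_dist P E"
    unfolding l1_dist_def f_def by (intro infsum_cong) (simp add: split_beta)
  have nn: "\<And>x. x \<in> UNIV \<Longrightarrow> 0 \<le> f x" unfolding f_def by (simp add: split_beta)
  have fin2: "infsum (\<lambda>x. ennreal (f x)) UNIV \<noteq> \<infinity>" using fin eq by simp
  have S: "f summable_on UNIV"
    by (rule summable_of_ennreal_finite[OF fin2 nn])
  then show "(\<lambda>(i,j). \<bar>P i j - E i j\<bar>) summable_on UNIV" by (simp add: f_def)
  have X: "ennreal (infsum f UNIV) = l1_dist P E"
    using infsum_ennreal_of_summable[OF S nn] eq by simp
  have nn2: "0 \<le> infsum f UNIV" by (rule infsum_nonneg) (rule nn)
  have "enn2real (l1_dist P E) = enn2real (ennreal (infsum f UNIV))" by (simp add: X)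
  also have "\<dots> = infsum f UNIV" using nn2 by simp
  finally show "enn2real (l1_dist P E) = infsum (\<lambda>(i,j). \<bar>P i j - E i j\<bar>) UNIV" by (simp add: f_def)
qed

lemma diff_bound:
  fixes P E :: "nat \<Rightarrow> nat \<Rightarrow> real"
  assumes Pz: "\<And>i j. \<not> (i < n \<and> j < n) \<Longrightarrow> P i j = 0"
    and fin: "l1_dist P E \<noteq> \<infinity>"
    and Es: "(\<lambda>(i,j). E i j) summable_on UNIV"
    and E0: "\<forall>i j. 0 \<le> E i j"
  shows "\<bar>Xp k n P T a b - Yl E k T a b\<bar> \<le> enn2real (l1_dist P E)"
proof (cases "a < k \<and> b < k")
  case False
  have "Xp k n P T a b = 0" unfolding Xp_def using False by (rule if_not_P)
  moreover have "Yl E k T a b = 0" unfolding Yl_def using False by (rule if_not_P)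
  ultimately show ?thesis by simp
next
  case True
  define fP where "fP = (\<lambda>(i,j). P i j * indicator (bin k a) (T i) * indicator (bin k b) (T j) :: real)"
  define fE where "fE = (\<lambda>(i,j). E i j * indicator (bin k a) (T i) * indicator (bin k b) (T j) :: real)"
  define fD where "fD = (\<lambda>x. fP x - fE x)"
  define A where "A = (\<lambda>(i,j). \<bar>P i j - E i j\<bar>)"
  have As: "A summable_on UNIV" unfolding A_def by (rule l1_summable(1)[OF fin])
  have Aeq: "enn2real (l1_dist P E) = infsum A UNIV" unfolding A_def by (rule l1_summable(2)[OF fin])
  have Dle: "norm (fD x) \<le> A x" for x
  proof -
    obtain i j where x: "x = (i,j)" by (cases x)
    define u :: real where "u = indicator (bin k a) (T i) * indicator (bin k b) (T j)"
    have fDx: "fD x = (P i j - E i j) * u"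
      unfolding x fD_def fP_def fE_def u_def by (simp add: algebra_simps)
    have u1: "\<bar>u\<bar> \<le> 1" unfolding u_def by (simp add: indicator_def)
    have "norm (fD x) = \<bar>P i j - E i j\<bar> * \<bar>u\<bar>" by (simp add: fDx abs_mult)
    also have "\<dots> \<le> \<bar>P i j - E i j\<bar>" by (rule mult_left_le[OF u1 abs_ge_zero])
    finally show ?thesis by (simp add: A_def x)
  qed
  have Dn: "(\<lambda>x. norm (fD x)) summable_on UNIV"
    by (rule Infinite_Sum.abs_summable_on_comparison_test'[OF As]) (use Dle in auto)
  have Ds: "fD summable_on UNIV" by (rule abs_summable_summable[OF Dn])
  have Es2: "fE summable_on UNIV"
    by (rule summable_on_comparison_test[OF Es]) (use E0 in \<open>auto simp: fE_def indicator_def\<close>)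
  have "Xp k n P T a b = (\<Sum>i<n. \<Sum>j<n. fP (i,j))"
    using True by (simp add: Xp_def fP_def)
  also have "\<dots> = (\<Sum>x\<in>{..<n}\<times>{..<n}. fP x)"
    by (simp add: sum.cartesian_product)
  also have "\<dots> = infsum fP ({..<n}\<times>{..<n})" by simp
  also have "\<dots> = infsum fP UNIV"
  proof (rule infsum_cong_neutral)
    have Pz': "\<And>i j. P i j \<noteq> 0 \<Longrightarrow> i < n \<and> j < n" using Pz by blast
    fix x :: "nat \<times> nat" assume "x \<in> UNIV - {..<n}\<times>{..<n}"
    then show "fP x = 0" by (cases x) (auto simp: fP_def dest: Pz')
  qed auto
  also have "\<dots> = infsum (\<lambda>x. fD x + fE x) UNIV"
    by (simp add: fD_def)
  also have "\<dots> = infsum fD UNIV + infsum fE UNIV"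
    by (rule infsum_add[OF Ds Es2])
  finally have X: "Xp k n P T a b = infsum fD UNIV + infsum fE UNIV" .
  have Y: "Yl E k T a b = infsum fE UNIV"
    using True by (simp add: Yl_def fE_def)
  have "\<bar>Xp k n P T a b - Yl E k T a b\<bar> = norm (infsum fD UNIV)" using X Y by simp
  also have "\<dots> \<le> infsum (\<lambda>x. norm (fD x)) UNIV" by (rule norm_infsum_bound[OF Dn])
  also have "\<dots> \<le> infsum A UNIV" by (rule infsum_mono[OF Dn As Dle])
  finally show ?thesis using Aeq by simp
qed

theorem mainTheorem9:
  fixes G :: "nat \<Rightarrow> nat \<Rightarrow> nat \<Rightarrow> real"
    and E :: "nat \<Rightarrow> nat \<Rightarrow> real"
    and \<pi> :: "nat \<Rightarrow> nat \<Rightarrow> nat"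
  assumes "\<forall>n\<ge>1. in_simplex n (G n)"
    and "\<forall>i j. 0 \<le> E i j"
    and "\<forall>n\<ge>1. \<pi> n permutes {..<n}"
    and "((\<lambda>n. l1_dist (perm_pad n (\<pi> n) (G n)) E) \<longlongrightarrow> 0) sequentially"
  shows "quot_conv G iid_unif (grapheur E)"
proof -
  note E0 = assms(2) and \<pi>p = assms(3)
  define P where "P n = perm_pad n (\<pi> n) (G n)" for n
  define d where "d n = l1_dist (P n) E" for n
  have lim: "(d \<longlongrightarrow> 0) sequentially" using assms(4) by (simp add: d_def[abs_def] P_def[abs_def])
  have "eventually (\<lambda>n. d n < 1) sequentially"
    using order_tendstoD(2)[OF lim] by simp
  then obtain N0 where N0: "\<And>n. n \<ge> N0 \<Longrightarrow> d n < 1" by (auto simp: eventually_sequentially)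
  have dfin: "d n \<noteq> \<infinity>" if "n \<ge> N0" for n
  proof -
    have "d n < top" using N0[OF that] less_trans[of "d n" 1 top] by simp
    then show ?thesis by simp
  qed
  have Pz: "\<And>i j. \<not> (i < n \<and> j < n) \<Longrightarrow> P n i j = 0" for n
    by (auto simp: P_def perm_pad_def)
  have Es: "(\<lambda>(i,j). E i j) summable_on UNIV"
  proof -
    have A0: "(\<lambda>(i,j). \<bar>P N0 i j - E i j\<bar>) summable_on UNIV"
      by (rule l1_summable(1)) (use dfin[of N0] in \<open>simp add: d_def\<close>)
    have "(\<lambda>(i,j). \<bar>P N0 i j\<bar>) summable_on ({..<N0}\<times>{..<N0}) \<longleftrightarrow> (\<lambda>(i,j). \<bar>P N0 i j\<bar>) summable_on UNIV"
    proof (rule summable_on_cong_neutral)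
      fix x :: "nat \<times> nat" assume x0: "x \<in> UNIV - {..<N0}\<times>{..<N0}"
      obtain i j where x: "x = (i,j)" by (cases x)
      have "\<not> (i < N0 \<and> j < N0)" using x0 x by auto
      then have "P N0 i j = 0" by (rule Pz)
      then show "(\<lambda>(i,j). \<bar>P N0 i j\<bar>) x = 0" using x by simp
    qed auto
    then have P0: "(\<lambda>(i,j). \<bar>P N0 i j\<bar>) summable_on UNIV" by simp
    show ?thesis
    proof (rule summable_on_comparison_test[OF summable_on_add[OF A0 P0]])
      fix x :: "nat \<times> nat"
      obtain i j where x: "x = (i,j)" by (cases x)
      have "- (P N0 i j - E i j) \<le> \<bar>P N0 i j - E i j\<bar>" by (rule abs_ge_minus_self)
      moreover have "P N0 i j \<le> \<bar>P N0 i j\<bar>" by (rule abs_ge_self)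
      ultimately have "E i j \<le> \<bar>P N0 i j - E i j\<bar> + \<bar>P N0 i j\<bar>" by linarith
      then show "(\<lambda>(i,j). E i j) x \<le> (\<lambda>(i,j). \<bar>P N0 i j - E i j\<bar>) x + (\<lambda>(i,j). \<bar>P N0 i j\<bar>) x"
        using x by simp
      show "0 \<le> (\<lambda>(i,j). E i j) x" using x E0 by simp
    qed
  qed
  interpret PR: prob_space iid_unif by (rule prob_iid)
  show ?thesis
    unfolding quot_conv_def conv_in_dist_def
  proof (intro allI impI)
    fix k :: nat and h :: "(nat \<Rightarrow> nat \<Rightarrow> real) \<Rightarrow> real"
    assume k: "k \<ge> 1" and cont: "continuous_on UNIV h" and bnd: "bounded (range h)"
    obtain B where B: "\<And>x. \<bar>h x\<bar> \<le> B" using bnd unfolding bounded_iff by auto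
    have hm: "h \<in> borel_measurable borel" by (rule borel_measurable_continuous_onI[OF cont])
    have isC: "isCont h x" for x using cont continuous_on_eq_continuous_at[of UNIV h] by auto
    have bnd1: "\<bar>Xp k n (P n) T a b - Yl E k T a b\<bar> \<le> enn2real (d n)" if "n \<ge> N0" for n T a b
    proof -
      have fn: "l1_dist (P n) E \<noteq> \<infinity>" using dfin[OF that] by (simp add: d_def)
      have pz: "\<And>i j. \<not> (i < n \<and> j < n) \<Longrightarrow> P n i j = 0" by (auto simp: P_def perm_pad_def)
      note db = diff_bound[where P="P n" and E=E and n=n and k=k and T=T and a=a and b=b, OF pz fn Es E0]
      show ?thesis using db by (simp add: d_def)
    qed
    have conv: "(\<lambda>n. Xp k n (P n) T) \<longlonglongrightarrow> Yl E k T" for T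
    proof (rule tendsto_dist_iff[THEN iffD2], rule Lim_null_comparison)
      show "\<forall>\<^sub>F n in sequentially. norm (dist (Xp k n (P n) T) (Yl E k T)) \<le> 2 * (2 * enn2real (d n))"
        unfolding eventually_sequentially
      proof (intro exI allI impI)
        fix n assume n: "N0 \<le> n"
        have "dist (Xp k n (P n) T) (Yl E k T) \<le> 2 * (2 * enn2real (d n))"
        proof (rule dist_fun_le)
          fix a
          show "dist (Xp k n (P n) T a) (Yl E k T a) \<le> 2 * enn2real (d n)"
          proof (rule dist_fun_le)
            fix b
            show "dist (Xp k n (P n) T a b) (Yl E k T a b) \<le> enn2real (d n)"
              using bnd1[OF n, of T a b] by (simp add: dist_real_def)
          qed simp
        qed simp
        then show "norm (dist (Xp k n (P n) T) (Yl E k T)) \<le> 2 * (2 * enn2real (d n))" by simp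
      qed
      have e0: "(\<lambda>n. enn2real (d n)) \<longlonglongrightarrow> 0"
        by (rule tendsto_enn2real) (use lim in simp_all)
      show "(\<lambda>n. 2 * (2 * enn2real (d n))) \<longlonglongrightarrow> 0"
        using tendsto_mult[OF tendsto_const[of "4::real"] e0] by simp
    qed
    have hconv: "(\<lambda>n. h (Xp k n (P n) T)) \<longlonglongrightarrow> h (Yl E k T)" for T
      by (rule isCont_tendsto_compose[OF isC conv])
    have meas: "(\<lambda>T. h (Xp k n (P n) T)) \<in> borel_measurable iid_unif" for n
      using measurable_compose[OF Xp_measurable hm] by (simp add: o_def)
    have Ymeas: "(\<lambda>T. h (Yl E k T)) \<in> borel_measurable iid_unif"
      by (rule borel_measurable_LIMSEQ_real[OF hconv meas])
    have DC: "(\<lambda>n. \<integral>T. h (Xp k n (P n) T) \<partial>iid_unif) \<longlonglongrightarrow> (\<integral>T. h (Yl E k T) \<partial>iid_unif)"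
    proof (rule integral_dominated_convergence[where w="\<lambda>_. B"])
      show "(\<lambda>T. h (Yl E k T)) \<in> borel_measurable iid_unif" by (rule Ymeas)
      show "(\<lambda>T. h (Xp k n (P n) T)) \<in> borel_measurable iid_unif" for n by (rule meas)
      show "integrable iid_unif (\<lambda>_. B)" by (rule PR.integrable_const)
      show "AE T in iid_unif. (\<lambda>n. h (Xp k n (P n) T)) \<longlonglongrightarrow> h (Yl E k T)"
        by (rule AE_I2) (rule hconv)
      show "AE T in iid_unif. norm (h (Xp k n (P n) T)) \<le> B" for n
        by (rule AE_I2) (simp add: B)
    qed
    have Geq: "Gk k (grapheur E T) = Yl E k T" for T
      by (intro ext) (simp add: Gk_def Yl_def measure_grapheur_bin[OF Es E0])
    have ev: "eventually (\<lambda>n. (\<integral>T. h (Xp k n (P n) T) \<partial>iid_unif) =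
                (\<integral>f. h (quot n f (G n)) \<partial>measure_pmf (rand_map k n))) sequentially"
      unfolding eventually_sequentially
    proof (intro exI[of _ 1] allI impI)
      fix n :: nat assume "1 \<le> n"
      then have "\<pi> n permutes {..<n}" using \<pi>p by simp
      then show "(\<integral>T. h (Xp k n (P n) T) \<partial>iid_unif) = (\<integral>f. h (quot n f (G n)) \<partial>measure_pmf (rand_map k n))"
        unfolding P_def by (rule coupling[OF k _ hm, symmetric])
    qed
    show "(\<lambda>n. \<integral>f. h (quot n f (G n)) \<partial>measure_pmf (rand_map k n)) \<longlonglongrightarrow> (\<integral>T. h (Gk k (grapheur E T)) \<partial>iid_unif)"
      unfolding Geq by (rule iffD1[OF tendsto_cong[OF ev] DC])
  qed
qed

end
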